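(* Let $\mathcal H$ be a real Hilbert space. Let $(T_i)_{i\in I}$ be a finite family of nonexpansive operators from $\mathcal H$ to $\mathcal H$ such that $\bigcap_{i\in I}\mathrm{Fix}\,T_i\neq\varnothing$, and let $(\alpha_i)_{i\in I}$ be real numbers in $\left]0,1\right[$ such that, for every $i\in I$, $T_i$ is $\alpha_i$-averaged. Let $p$ be a strictly positive integer, for every $k\in\{1,\ldots,p\}$ let $m_k$ be a strictly positive integer and let $\omega_k\in\left]0,1\right]$, and suppose that $\mathrm{i}\colon\{(k,l)\mid k\in\{1,\ldots,p\},\,l\in\{1,\ldots,m_k\}\}\to I$ is surjective and that $\sum_{k=1}^{p}\omega_k=1$. Define $$T=\sum_{k=1}^{p}\omega_kT_{\mathrm{i}(k,1)}\cdots T_{\mathrm{i}(k,m_k)}.$$ Then: (i) Setting $$\alpha=\sum_{k=1}^{p}\dfrac{\omega_k}{1+\dfrac{1}{\sum_{i=1}^{m_k}\dfrac{\alpha_{\mathrm{i}(k,i)}}{1-\alpha_{\mathrm{i}(k,i)}}}},$$ $T$ is $\alpha$-averaged and $\mathrm{Fix}\,T=\bigcap_{i\in I}\mathrm{Fix}\,T_i$. (ii) Let $(\lambda_n)_{n\in\mathbb N}$ be a sequence in $\left]0,1/\alpha\right[$ (with $\alpha$ as in (i)) such that $\sum_{n\in\mathbb N}\lambda_n(1/\alpha-\lambda_n)=+\infty$, let $x_0\in\mathcal H$, and set $x_{n+1}=x_n+\lambda_n(Tx_n-x_n)$ for every $n\in\mathbb N$. Then $(x_n)_{n\in\mathbb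 N}$ converges weakly to a point in $\bigcap_{i\in I}\mathrm{Fix}\,T_i$.
   Context: An operator $T\colon D\to\mathcal H$ ($D\subset\mathcal H$ nonempty) is nonexpansive if it is 1-Lipschitz. For $\alpha\in\left]0,1\right[$, a nonexpansive $T$ is $\alpha$-averaged if there exists a nonexpansive $R\colon D\to\mathcal H$ with $T=(1-\alpha)\mathrm{Id}+\alpha R$. $\mathrm{Fix}\,T=\{x\mid Tx=x\}$. *)

theory Defs
  imports "HOL-Analysis.Analysis"
begin

definition nonexpansive :: "('a::real_normed_vector \<Rightarrow> 'a) \<Rightarrow> bool" where
  "nonexpansive T \<longleftrightarrow> (\<forall>x y. norm (T x - T y) \<le> norm (x - y))"

definition averaged :: "real \<Rightarrow> ('a::real_normed_vector \<Rightarrow> 'a) \<Rightarrow> bool" where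
  "averaged \<alpha> T \<longleftrightarrow> 0 < \<alpha> \<and> \<alpha> < 1 \<and> nonexpansive T \<and>
     (\<exists>R. nonexpansive R \<and> T = (\<lambda>x. (1 - \<alpha>) *\<^sub>R x + \<alpha> *\<^sub>R R x))"

definition Fix :: "('a \<Rightarrow> 'a) \<Rightarrow> 'a set" where
  "Fix T = {x. T x = x}"

definition weakly_converges :: "(nat \<Rightarrow> 'a::real_inner) \<Rightarrow> 'a \<Rightarrow> bool" where
  "weakly_converges x z \<longleftrightarrow> (\<forall>y. (\<lambda>n. inner (x n) y) \<longlonglongrightarrow> inner z y)"

text \<open>Composition T_{i(k,1)} o ... o T_{i(k,m)} (the rightmost is applied first).\<close>
definition comp_chain :: "('i \<Rightarrow> 'a \<Rightarrow> 'a) \<Rightarrow> (nat \<Rightarrow> 'i) \<Rightarrow> nat \<Rightarrow> 'a \<Rightarrow> 'a" where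
  "comp_chain T ix m = foldr (\<circ>) (map (\<lambda>l. T (ix l)) [1..<m+1]) id"

end

theory Submission
  imports Defs "HOL-Library.Diagonal_Subsequence"
begin

lemma norm_combo:
  fixes u v :: "'a::real_inner"
  shows "(norm ((1-t) *\<^sub>R u + t *\<^sub>R v))\<^sup>2 = (1-t)*(norm u)\<^sup>2 + t*(norm v)\<^sup>2 - t*(1-t)*(norm (u - v))\<^sup>2"
  unfolding power2_norm_eq_inner
  by (simp add: inner_diff_left inner_diff_right inner_add_left inner_add_right inner_commute algebra_simps)

definition PB :: "real \<Rightarrow> ('a::real_inner \<Rightarrow> 'a) \<Rightarrow> bool" where
  "PB b T \<longleftrightarrow> (\<forall>x y. b*(norm (T x - T y))\<^sup>2 + (norm ((x - T x) - (y - T y)))\<^sup>2 \<le> b*(norm (x-y))\<^sup>2)"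

lemma avg_PB:
  fixes T :: "'a::real_inner \<Rightarrow> 'a"
  assumes "averaged a T" shows "PB (a/(1-a)) T"
proof -
  from assms obtain R where R: "nonexpansive R" and T: "T = (\<lambda>x. (1-a) *\<^sub>R x + a *\<^sub>R R x)"
    and a: "0<a" "a<1" unfolding averaged_def by blast
  show ?thesis unfolding PB_def
  proof (intro allI)
    fix x y :: 'a
    define u where "u = x - y"
    define r where "r = R x - R y"
    have e1: "T x - T y = (1-a) *\<^sub>R u + a *\<^sub>R r" by (simp add: T u_def r_def algebra_simps)
    have e2: "(x - T x) - (y - T y) = a *\<^sub>R (u - r)" by (simp add: T u_def r_def algebra_simps)
    have nr: "norm r \<le> norm u" using R unfolding nonexpansive_def u_def r_def by blast
    hence nr2: "(norm r)\<^sup>2 \<le> (norm u)\<^sup>2" by (simp add: power_mono)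
    have id: "(norm (T x - T y))\<^sup>2 = (1-a)*(norm u)\<^sup>2 + a*(norm r)\<^sup>2 - a*(1-a)*(norm (u - r))\<^sup>2"
      using norm_combo e1 by metis
    have id2: "(norm ((x - T x) - (y - T y)))\<^sup>2 = a\<^sup>2 * (norm (u - r))\<^sup>2"
      by (simp add: e2 power_mult_distrib)
    have "a/(1-a)*(norm (T x - T y))\<^sup>2 + (norm ((x - T x) - (y - T y)))\<^sup>2
        = a/(1-a)*((1-a)*(norm u)\<^sup>2 + a*(norm r)\<^sup>2 - a*(1-a)*(norm (u - r))\<^sup>2) + a\<^sup>2 * (norm (u - r))\<^sup>2"
      by (simp only: id id2)
    also have "\<dots> = a*(norm u)\<^sup>2 + (a\<^sup>2/(1-a))*(norm r)\<^sup>2"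
      using a by (simp add: field_simps power2_eq_square)
    also have "\<dots> \<le> a*(norm u)\<^sup>2 + (a\<^sup>2/(1-a))*(norm u)\<^sup>2"
      using a nr2 by (intro add_left_mono mult_left_mono) auto
    also have "\<dots> = a/(1-a) * (norm u)\<^sup>2"
      using a by (simp add: field_simps power2_eq_square)
    finally show "a/(1-a)*(norm (T x - T y))\<^sup>2 + (norm ((x - T x) - (y - T y)))\<^sup>2 \<le> a/(1-a)*(norm (x-y))\<^sup>2"
      by (simp add: u_def)
  qed
qed

lemma key_ineq:
  fixes a b :: "'a::real_inner"
  assumes "0 \<le> b1" "0 \<le> b2"
  shows "b1*b2*(norm (a+b))\<^sup>2 \<le> (b1+b2)*(b1*(norm a)\<^sup>2 + b2*(norm b)\<^sup>2)"
proof -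
  have "0 \<le> (norm (b1 *\<^sub>R a - b2 *\<^sub>R b))\<^sup>2" by simp
  thus ?thesis unfolding power2_norm_eq_inner
    by (simp add: inner_diff_left inner_diff_right inner_add_left inner_add_right inner_commute algebra_simps power2_eq_square)
qed

lemma PB_comp:
  fixes T1 T2 :: "'a::real_inner \<Rightarrow> 'a"
  assumes P1: "PB b1 T1" and P2: "PB b2 T2" and b: "0 \<le> b1" "0 \<le> b2"
  shows "PB (b1+b2) (T1 \<circ> T2)"
  unfolding PB_def
proof (intro allI)
  fix x y :: 'a
  define u where "u = x - y"
  define w where "w = T2 x - T2 y"
  define v where "v = T1 (T2 x) - T1 (T2 y)"
  define a where "a = u - w"
  define c where "c = w - v"
  have ea: "a = (x - T2 x) - (y - T2 y)" by (simp add: a_def u_def w_def algebra_simps)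
  have ec: "c = (T2 x - T1 (T2 x)) - (T2 y - T1 (T2 y))" by (simp add: c_def v_def w_def algebra_simps)
  have h1: "b2*(norm w)\<^sup>2 + (norm a)\<^sup>2 \<le> b2*(norm u)\<^sup>2"
    unfolding ea w_def u_def using P2[unfolded PB_def] by blast
  have h2: "b1*(norm v)\<^sup>2 + (norm c)\<^sup>2 \<le> b1*(norm w)\<^sup>2"
    unfolding ec w_def v_def using P1[unfolded PB_def] by blast
  have eq: "(x - (T1 \<circ> T2) x) - (y - (T1 \<circ> T2) y) = a + c" by (simp add: a_def c_def u_def w_def v_def algebra_simps)
  have main: "(b1+b2)*(norm v)\<^sup>2 + (norm (a+c))\<^sup>2 \<le> (b1+b2)*(norm u)\<^sup>2"
  proof (cases "b1 = 0")
    case True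
    then have "(norm c)\<^sup>2 \<le> 0" using h2 by simp
    then have "c = 0" by simp
    then have "v = w" by (simp add: c_def)
    thus ?thesis using True h1 \<open>c = 0\<close> by simp
  next
    case False
    show ?thesis
    proof (cases "b2 = 0")
      case True
      then have "(norm a)\<^sup>2 \<le> 0" using h1 by simp
      then have "a = 0" by simp
      then have "u = w" by (simp add: a_def)
      thus ?thesis using True h2 \<open>a = 0\<close> by simp
    next
      case F2: False
      have p1: "b1 > 0" "b2 > 0" using b False F2 by auto
      have k: "b1*b2*(norm (a+c))\<^sup>2 \<le> (b1+b2)*(b1*(norm a)\<^sup>2 + b2*(norm c)\<^sup>2)"
        using key_ineq b by blast
      have s1: "b1*b2*(norm w)\<^sup>2 + b1*(norm a)\<^sup>2 \<le> b1*b2*(norm u)\<^sup>2"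
        using mult_left_mono[OF h1, of b1] b by (simp add: algebra_simps)
      have s2: "b1*b2*(norm v)\<^sup>2 + b2*(norm c)\<^sup>2 \<le> b1*b2*(norm w)\<^sup>2"
        using mult_left_mono[OF h2, of b2] b by (simp add: algebra_simps)
      have s3: "b1*b2*(norm v)\<^sup>2 + b1*(norm a)\<^sup>2 + b2*(norm c)\<^sup>2 \<le> b1*b2*(norm u)\<^sup>2"
        using s1 s2 by linarith
      have "(b1*b2) * ((b1+b2)*(norm v)\<^sup>2 + (norm (a+c))\<^sup>2)
          \<le> (b1+b2)*(b1*b2*(norm v)\<^sup>2 + b1*(norm a)\<^sup>2 + b2*(norm c)\<^sup>2)"
        using k by (simp add: algebra_simps)
      also have "\<dots> \<le> (b1+b2)*(b1*b2*(norm u)\<^sup>2)"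
        using s3 b by (intro mult_left_mono) auto
      also have "\<dots> = (b1*b2)*((b1+b2)*(norm u)\<^sup>2)" by (simp add: algebra_simps)
      finally show ?thesis using p1 by (simp add: mult_le_cancel_left_pos)
    qed
  qed
  have eq2: "x - T1 (T2 x) - (y - T1 (T2 y)) = a + c" using eq by simp
  show "(b1 + b2) * (norm ((T1 \<circ> T2) x - (T1 \<circ> T2) y))\<^sup>2 + (norm (x - (T1 \<circ> T2) x - (y - (T1 \<circ> T2) y)))\<^sup>2
         \<le> (b1 + b2) * (norm (x - y))\<^sup>2"
    using main by (simp add: eq2 v_def u_def)
qed

lemma sq_le_imp_norm_le:
  fixes u v :: "'a::real_normed_vector"
  shows "(norm v)\<^sup>2 \<le> (norm u)\<^sup>2 \<Longrightarrow> norm v \<le> norm u"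
  by (erule power2_le_imp_le) simp

lemma realA:
  fixes s U V D :: real
  assumes "0 < s"
  shows "(1-(1+s)/s)*U + (1+s)/s*V - (1+s)/s*(1-(1+s)/s)*D = (-s*U + (1+s)*(s*V + D)) / s\<^sup>2"
  using assms by (simp add: field_simps power2_eq_square)

lemma realB:
  fixes s U :: real
  assumes "0 < s"
  shows "(-s*U + (1+s)*(s*U)) / s\<^sup>2 = U"
  using assms by (simp add: field_simps power2_eq_square)

lemma PB_avg:
  fixes T :: "'a::real_inner \<Rightarrow> 'a"
  assumes P: "PB s T" and s: "0 < s"
  shows "averaged (s/(1+s)) T"
proof -
  define al where "al = s/(1+s)"
  have al: "0 < al" "al < 1" using s by (auto simp: al_def field_simps)
  define R where "R = (\<lambda>x. (1/al) *\<^sub>R T x - (1/s) *\<^sub>R x)"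
  have TR: "T = (\<lambda>x. (1 - al) *\<^sub>R x + al *\<^sub>R R x)"
  proof
    fix x
    have "(1 - al) *\<^sub>R x + al *\<^sub>R R x = (1 - al - al/s) *\<^sub>R x + T x"
      using al by (simp add: R_def algebra_simps)
    also have "1 - al - al/s = 0"
    proof -
      have "1 - al = 1/(1+s)" using s by (simp add: al_def field_simps)
      moreover have "al/s = 1/(1+s)" using s by (simp add: al_def)
      ultimately show ?thesis by linarith
    qed
    finally show "T x = (1 - al) *\<^sub>R x + al *\<^sub>R R x" by simp
  qed
  have neR: "nonexpansive R" unfolding nonexpansive_def
  proof (intro allI)
    fix x y :: 'a
    define u where "u = x - y"
    define v where "v = T x - T y"
    define t where "t = 1/al"
    have t1: "t = (1+s)/s" using s by (simp add: t_def al_def)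
    have t: "t = (1+s)/s" "1 - t = -1/s" using t1 s by (auto simp: field_simps)
    have e0: "(1-t) *\<^sub>R u + t *\<^sub>R v = (-1/s) *\<^sub>R u + (1/al) *\<^sub>R v"
      using t(2) by (simp add: t_def)
    have e: "R x - R y = (1-t) *\<^sub>R u + t *\<^sub>R v"
      unfolding e0 by (simp add: R_def u_def v_def scaleR_diff_right)
    have h: "s*(norm v)\<^sup>2 + (norm (u - v))\<^sup>2 \<le> s*(norm u)\<^sup>2"
    proof -
      have eq: "u - v = (x - T x) - (y - T y)" by (simp add: u_def v_def algebra_simps)
      have hh: "s*(norm (T x - T y))\<^sup>2 + (norm ((x - T x) - (y - T y)))\<^sup>2 \<le> s*(norm (x-y))\<^sup>2"
        using P unfolding PB_def by blast
      show ?thesis unfolding eq unfolding u_def v_def by (rule hh)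
    qed
    have "(norm (R x - R y))\<^sup>2 = (1-t)*(norm u)\<^sup>2 + t*(norm v)\<^sup>2 - t*(1-t)*(norm (u - v))\<^sup>2"
      unfolding e by (rule norm_combo)
    also have "\<dots> = (-s*(norm u)\<^sup>2 + (1+s)*(s*(norm v)\<^sup>2 + (norm (u - v))\<^sup>2)) / s\<^sup>2"
      using s unfolding t(1) by (rule realA)
    also have "\<dots> \<le> (-s*(norm u)\<^sup>2 + (1+s)*(s*(norm u)\<^sup>2)) / s\<^sup>2"
      using s h by (intro divide_right_mono add_left_mono mult_left_mono) auto
    also have "\<dots> = (norm u)\<^sup>2" using s by (rule realB)
    finally show "norm (R x - R y) \<le> norm (x - y)" unfolding u_def by (rule sq_le_imp_norm_le)
  qed
  have neT: "nonexpansive T" unfolding nonexpansive_def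
  proof (intro allI)
    fix x y :: 'a
    have "s*(norm (T x - T y))\<^sup>2 + (norm ((x - T x) - (y - T y)))\<^sup>2 \<le> s*(norm (x-y))\<^sup>2"
      using P unfolding PB_def by blast
    moreover have "0 \<le> (norm ((x - T x) - (y - T y)))\<^sup>2" by simp
    ultimately have "s*(norm (T x - T y))\<^sup>2 \<le> s*(norm (x - y))\<^sup>2" by linarith
    hence "(norm (T x - T y))\<^sup>2 \<le> (norm (x - y))\<^sup>2" using s by simp
    thus "norm (T x - T y) \<le> norm (x - y)" by (rule sq_le_imp_norm_le)
  qed
  have ex: "\<exists>R. nonexpansive R \<and> T = (\<lambda>x. (1 - al) *\<^sub>R x + al *\<^sub>R R x)"
    by (rule exI[of _ R], rule conjI[OF neR TR])
  show ?thesis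
    unfolding averaged_def al_def[symmetric]
    apply (intro conjI)
       apply (rule al(1))
      apply (rule al(2))
     apply (rule neT)
    apply (rule ex)
    done
qed

lemma avg_nonexp_of:
  fixes R :: "'a::real_normed_vector \<Rightarrow> 'a"
  assumes "nonexpansive R" "0 \<le> a" "a \<le> 1"
  shows "nonexpansive (\<lambda>x. (1-a) *\<^sub>R x + a *\<^sub>R R x)"
  unfolding nonexpansive_def
proof (intro allI)
  fix x y
  have "norm (((1-a) *\<^sub>R x + a *\<^sub>R R x) - ((1-a) *\<^sub>R y + a *\<^sub>R R y))
      = norm ((1-a) *\<^sub>R (x - y) + a *\<^sub>R (R x - R y))" by (simp add: algebra_simps)
  also have "\<dots> \<le> norm ((1-a) *\<^sub>R (x - y)) + norm (a *\<^sub>R (R x - R y))"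
    by (rule norm_triangle_ineq)
  also have "\<dots> = (1-a) * norm (x-y) + a * norm (R x - R y)"
    using assms by simp
  also have "\<dots> \<le> (1-a) * norm (x-y) + a * norm (x - y)"
    using assms unfolding nonexpansive_def by (intro add_left_mono mult_left_mono) auto
  finally show "norm (((1-a) *\<^sub>R x + a *\<^sub>R R x) - ((1-a) *\<^sub>R y + a *\<^sub>R R y)) \<le> norm (x - y)"
    by (simp add: algebra_simps)
qed

lemma PB_id: "PB 0 (id :: 'a::real_inner \<Rightarrow> 'a)"
  unfolding PB_def by simp

lemma PB_chain:
  fixes T :: "'i \<Rightarrow> 'a::real_inner \<Rightarrow> 'a"
  assumes "\<forall>i\<in>set xs. averaged (a i) (T i)"
  shows "PB (sum_list (map (\<lambda>i. a i/(1 - a i)) xs)) (foldr (\<circ>) (map T xs) id)"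
  using assms
proof (induction xs)
  case Nil show ?case unfolding PB_def by simp
next
  case (Cons x xs)
  have ax: "averaged (a x) (T x)" using Cons.prems by simp
  hence ax01: "0 < a x" "a x < 1" unfolding averaged_def by auto
  have nn: "0 \<le> sum_list (map (\<lambda>i. a i/(1 - a i)) xs)"
  proof (rule sum_list_nonneg)
    fix y assume "y \<in> set (map (\<lambda>i. a i / (1 - a i)) xs)"
    then obtain i where "i \<in> set xs" "y = a i / (1 - a i)" by auto
    moreover have "0 < a i" "a i < 1" using Cons.prems \<open>i \<in> set xs\<close> unfolding averaged_def by auto
    ultimately show "0 \<le> y" by simp
  qed
  have e1: "foldr (\<circ>) (map T (x#xs)) id = T x \<circ> foldr (\<circ>) (map T xs) id" by simp
  have e2: "sum_list (map (\<lambda>i. a i/(1 - a i)) (x#xs)) = a x/(1 - a x) + sum_list (map (\<lambda>i. a i/(1 - a i)) xs)" by simp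
  show ?case unfolding e1 e2
    by (rule PB_comp[OF avg_PB[OF ax] Cons.IH]) (use Cons.prems ax01 nn in auto)
qed

lemma avg_convex:
  fixes C :: "nat \<Rightarrow> 'a::real_inner \<Rightarrow> 'a"
  assumes fin: "finite K" and ne: "K \<noteq> {}" and av: "\<forall>k\<in>K. averaged (al k) (C k)"
    and w: "\<forall>k\<in>K. 0 < w k" and s: "sum w K = 1"
  shows "averaged (\<Sum>k\<in>K. w k * al k) (\<lambda>x. \<Sum>k\<in>K. w k *\<^sub>R C k x)"
proof -
  have "\<forall>k\<in>K. \<exists>R. nonexpansive R \<and> C k = (\<lambda>x. (1 - al k) *\<^sub>R x + al k *\<^sub>R R x)"
    using av unfolding averaged_def by blast
  from bchoice[OF this] obtain RR where RR: "\<forall>k\<in>K. nonexpansive (RR k) \<and> C k = (\<lambda>x. (1 - al k) *\<^sub>R x + al k *\<^sub>R RR k x)"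
    by blast
  have al01: "\<forall>k\<in>K. 0 < al k \<and> al k < 1" using av unfolding averaged_def by blast
  define A where "A = (\<Sum>k\<in>K. w k * al k)"
  have A0: "0 < A" unfolding A_def using fin ne w al01 by (intro sum_pos) auto
  have "A < (\<Sum>k\<in>K. w k)" unfolding A_def using fin ne w al01 by (intro sum_strict_mono) auto
  hence A1: "A < 1" using s by simp
  define R where "R = (\<lambda>x. \<Sum>k\<in>K. (w k * al k / A) *\<^sub>R RR k x)"
  have cs: "(\<Sum>k\<in>K. w k * al k / A) = 1"
    using A0 by (simp add: A_def sum_divide_distrib[symmetric])
  have Tform: "(\<lambda>x. \<Sum>k\<in>K. w k *\<^sub>R C k x) = (\<lambda>x. (1 - A) *\<^sub>R x + A *\<^sub>R R x)"
  proof
    fix x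
    have "(\<Sum>k\<in>K. w k *\<^sub>R C k x) = (\<Sum>k\<in>K. (w k * (1 - al k)) *\<^sub>R x + (w k * al k) *\<^sub>R RR k x)"
      by (rule sum.cong) (use RR in \<open>auto simp: algebra_simps\<close>)
    also have "\<dots> = (\<Sum>k\<in>K. w k * (1 - al k)) *\<^sub>R x + (\<Sum>k\<in>K. (w k * al k) *\<^sub>R RR k x)"
      by (simp add: sum.distrib scaleR_sum_left)
    also have "(\<Sum>k\<in>K. w k * (1 - al k)) = 1 - A"
      using s by (simp add: A_def algebra_simps sum_subtractf)
    also have "(\<Sum>k\<in>K. (w k * al k) *\<^sub>R RR k x) = A *\<^sub>R R x"
      using A0 by (simp add: R_def scaleR_sum_right)
    finally show "(\<Sum>k\<in>K. w k *\<^sub>R C k x) = (1 - A) *\<^sub>R x + A *\<^sub>R R x" .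
  qed
  have neR: "nonexpansive R" unfolding nonexpansive_def
  proof (intro allI)
    fix x y :: 'a
    have eR: "R x - R y = (\<Sum>k\<in>K. (w k * al k / A) *\<^sub>R (RR k x - RR k y))"
      by (simp add: R_def sum_subtractf scaleR_diff_right)
    have "norm (R x - R y) \<le> (\<Sum>k\<in>K. norm ((w k * al k / A) *\<^sub>R (RR k x - RR k y)))"
      unfolding eR by (rule norm_sum)
    also have "\<dots> \<le> (\<Sum>k\<in>K. (w k * al k / A) * norm (x - y))"
    proof (rule sum_mono)
      fix k assume k: "k \<in> K"
      have c0: "0 \<le> w k * al k / A" using k w al01 A0 by (simp add: less_imp_le)
      have nr: "norm (RR k x - RR k y) \<le> norm (x - y)" using RR k unfolding nonexpansive_def by blast
      have "norm ((w k * al k / A) *\<^sub>R (RR k x - RR k y)) = (w k * al k / A) * norm (RR k x - RR k y)"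
        using c0 by (simp only: norm_scaleR abs_of_nonneg)
      also have "\<dots> \<le> (w k * al k / A) * norm (x - y)" by (rule mult_left_mono[OF nr c0])
      finally show "norm ((w k * al k / A) *\<^sub>R (RR k x - RR k y)) \<le> (w k * al k / A) * norm (x - y)" .
    qed
    also have "\<dots> = norm (x - y)" by (simp only: sum_distrib_right[symmetric] cs mult_1_left)
    finally show "norm (R x - R y) \<le> norm (x - y)" .
  qed
  have neT: "nonexpansive (\<lambda>x. \<Sum>k\<in>K. w k *\<^sub>R C k x)"
    unfolding Tform using neR A0 A1 by (intro avg_nonexp_of) auto
  have ex: "\<exists>R. nonexpansive R \<and> (\<lambda>x. \<Sum>k\<in>K. w k *\<^sub>R C k x) = (\<lambda>x. (1 - A) *\<^sub>R x + A *\<^sub>R R x)"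
    by (rule exI[of _ R], rule conjI[OF neR Tform])
  show ?thesis
    unfolding averaged_def A_def[symmetric]
    apply (intro conjI)
       apply (rule A0)
      apply (rule A1)
     apply (rule neT)
    apply (rule ex)
    done
qed

lemma avg_quasi:
  fixes T :: "'a::real_inner \<Rightarrow> 'a"
  assumes av: "averaged a T" and z: "T z = z"
  shows "norm (T y - z) \<le> norm (y - z) \<and> (norm (T y - z) = norm (y - z) \<longrightarrow> T y = y)"
proof -
  from av obtain R where R: "nonexpansive R" and T: "T = (\<lambda>x. (1-a) *\<^sub>R x + a *\<^sub>R R x)"
    and a: "0<a" "a<1" unfolding averaged_def by blast
  have "a *\<^sub>R (R z - z) = 0" using z by (simp add: T algebra_simps)
  hence Rz: "R z = z" using a by simp
  have e: "T y - z = (1-a) *\<^sub>R (y - z) + a *\<^sub>R (R y - z)" by (simp add: T algebra_simps)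
  have nr: "norm (R y - z) \<le> norm (y - z)" using R Rz unfolding nonexpansive_def by metis
  hence nr2: "(norm (R y - z))\<^sup>2 \<le> (norm (y - z))\<^sup>2" by (simp add: power_mono)
  have "(norm (T y - z))\<^sup>2 = (1-a)*(norm (y - z))\<^sup>2 + a*(norm (R y - z))\<^sup>2 - a*(1-a)*(norm ((y - z) - (R y - z)))\<^sup>2"
    unfolding e by (rule norm_combo)
  also have "(y - z) - (R y - z) = y - R y" by simp
  finally have id: "(norm (T y - z))\<^sup>2 = (1-a)*(norm (y - z))\<^sup>2 + a*(norm (R y - z))\<^sup>2 - a*(1-a)*(norm (y - R y))\<^sup>2" .
  have p: "0 \<le> a*(1-a)*(norm (y - R y))\<^sup>2" using a by simp
  have le: "(norm (T y - z))\<^sup>2 \<le> (norm (y - z))\<^sup>2 - a*(1-a)*(norm (y - R y))\<^sup>2"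
  proof -
    have "a*(norm (R y - z))\<^sup>2 \<le> a*(norm (y - z))\<^sup>2" using nr2 a by (intro mult_left_mono) auto
    thus ?thesis using id by (simp add: algebra_simps)
  qed
  have 1: "norm (T y - z) \<le> norm (y - z)"
    using le p by (intro sq_le_imp_norm_le) linarith
  have 2: "T y = y" if eq: "norm (T y - z) = norm (y - z)"
  proof -
    have "a*(1-a)*(norm (y - R y))\<^sup>2 \<le> 0" using le eq by simp
    moreover have "a*(1-a) > 0" using a by simp
    ultimately have "\<not> (norm (y - R y))\<^sup>2 > 0"
      by (metis mult_pos_pos not_le)
    hence "y = R y" by simp
    thus ?thesis by (simp add: T algebra_simps)
  qed
  show ?thesis using 1 2 by blast
qed

lemma chain_fixall:
  fixes T :: "'i \<Rightarrow> 'a \<Rightarrow> 'a"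
  shows "(\<forall>i\<in>set xs. T i y = y) \<Longrightarrow> foldr (\<circ>) (map T xs) id y = y"
  by (induction xs) auto

lemma chain_quasi:
  fixes T :: "'i \<Rightarrow> 'a::real_inner \<Rightarrow> 'a"
  assumes "\<forall>i\<in>set xs. averaged (a i) (T i) \<and> T i z = z"
  shows "norm (foldr (\<circ>) (map T xs) id y - z) \<le> norm (y - z) \<and>
         (norm (foldr (\<circ>) (map T xs) id y - z) = norm (y - z) \<longrightarrow> (\<forall>i\<in>set xs. T i y = y))"
  using assms
proof (induction xs)
  case Nil thus ?case by simp
next
  case (Cons x xs)
  define c where "c = foldr (\<circ>) (map T xs) id y"
  have e: "foldr (\<circ>) (map T (x#xs)) id y = T x c" by (simp add: c_def)
  have pr: "\<forall>i\<in>set xs. averaged (a i) (T i) \<and> T i z = z" using Cons.prems by simp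
  have IH: "norm (c - z) \<le> norm (y - z) \<and> (norm (c - z) = norm (y - z) \<longrightarrow> (\<forall>i\<in>set xs. T i y = y))"
    unfolding c_def by (rule Cons.IH[OF pr])
  have q: "norm (T x c - z) \<le> norm (c - z) \<and> (norm (T x c - z) = norm (c - z) \<longrightarrow> T x c = c)"
    using Cons.prems by (intro avg_quasi) auto
  have 1: "norm (T x c - z) \<le> norm (y - z)" using IH q by linarith
  have 2: "\<forall>i\<in>set (x#xs). T i y = y" if eq: "norm (T x c - z) = norm (y - z)"
  proof -
    have "norm (c - z) = norm (y - z)" "norm (T x c - z) = norm (c - z)" using eq IH q by linarith+
    hence all: "\<forall>i\<in>set xs. T i y = y" and "T x c = c" using IH q by blast+
    moreover have "c = y" unfolding c_def using all by (rule chain_fixall)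
    ultimately show ?thesis by simp
  qed
  show ?case unfolding e using 1 2 by blast
qed

lemma convex_fix:
  fixes C :: "nat \<Rightarrow> 'a::real_inner \<Rightarrow> 'a"
  assumes fin: "finite K" and w: "\<forall>k\<in>K. 0 < w k" and s: "sum w K = 1"
    and q: "\<forall>k\<in>K. norm (C k x - z) \<le> norm (x - z)"
    and fx: "(\<Sum>k\<in>K. w k *\<^sub>R C k x) = x"
  shows "\<forall>k\<in>K. norm (C k x - z) = norm (x - z)"
proof -
  have "(\<Sum>k\<in>K. w k *\<^sub>R z) = z" using s by (simp add: scaleR_sum_left[symmetric])
  hence ex: "x - z = (\<Sum>k\<in>K. w k *\<^sub>R (C k x - z))"
    using fx by (simp add: scaleR_diff_right sum_subtractf)
  have "norm (x - z) \<le> (\<Sum>k\<in>K. norm (w k *\<^sub>R (C k x - z)))" unfolding ex by (rule norm_sum)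
  also have "\<dots> = (\<Sum>k\<in>K. w k * norm (C k x - z))"
    by (rule sum.cong) (use w in \<open>auto simp: less_imp_le\<close>)
  finally have le: "norm (x - z) \<le> (\<Sum>k\<in>K. w k * norm (C k x - z))" .
  have "(\<Sum>k\<in>K. w k * (norm (x - z) - norm (C k x - z))) = norm (x - z) - (\<Sum>k\<in>K. w k * norm (C k x - z))"
    using s by (simp add: algebra_simps sum_subtractf sum_distrib_right[symmetric])
  also have "\<dots> \<le> 0" using le by simp
  finally have s0: "(\<Sum>k\<in>K. w k * (norm (x - z) - norm (C k x - z))) \<le> 0" .
  have nn: "\<forall>k\<in>K. 0 \<le> w k * (norm (x - z) - norm (C k x - z))"
    using w q by (simp add: less_imp_le)
  have "0 \<le> (\<Sum>k\<in>K. w k * (norm (x - z) - norm (C k x - z)))"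
    by (rule sum_nonneg) (use nn in auto)
  hence "(\<Sum>k\<in>K. w k * (norm (x - z) - norm (C k x - z))) = 0"
    using s0 by linarith
  hence z0: "\<forall>k\<in>K. w k * (norm (x - z) - norm (C k x - z)) = 0"
    using fin nn by (simp add: sum_nonneg_eq_0_iff)
  show ?thesis
  proof
    fix k assume k: "k \<in> K"
    have "w k * (norm (x - z) - norm (C k x - z)) = 0" using z0 k by blast
    moreover have "w k \<noteq> 0" using w k by auto
    ultimately show "norm (C k x - z) = norm (x - z)" by simp
  qed
qed

definition lsub :: "'a::real_vector set \<Rightarrow> bool" where
  "lsub M \<longleftrightarrow> 0 \<in> M \<and> (\<forall>u\<in>M. \<forall>v\<in>M. u + v \<in> M) \<and> (\<forall>c. \<forall>u\<in>M. c *\<^sub>R u \<in> M)"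

lemma norm_minus_scale_sq:
  fixes w v :: "'a::real_inner"
  shows "(norm (w - t *\<^sub>R v))\<^sup>2 = (norm w)\<^sup>2 - 2*t*inner w v + t\<^sup>2 * (norm v)\<^sup>2"
  unfolding power2_norm_eq_inner
  by (simp add: inner_diff_left inner_diff_right inner_commute algebra_simps power2_eq_square)

lemma parallelogram:
  fixes a b :: "'a::real_inner"
  shows "(norm (a - b))\<^sup>2 = 2*(norm a)\<^sup>2 + 2*(norm b)\<^sup>2 - (norm (a + b))\<^sup>2"
  unfolding power2_norm_eq_inner
  by (simp add: inner_diff_left inner_diff_right inner_add_left inner_add_right inner_commute algebra_simps)

lemma orth_from_min:
  fixes w v :: "'a::real_inner"
  assumes "\<forall>t. (norm w)\<^sup>2 \<le> (norm (w - t *\<^sub>R v))\<^sup>2"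
  shows "inner w v = 0"
proof -
  define b where "b = inner w v"
  define N where "N = (norm v)\<^sup>2"
  have N0: "0 \<le> N" by (simp add: N_def)
  define t where "t = b / (N + 1)"
  have "(norm w)\<^sup>2 \<le> (norm w)\<^sup>2 - 2*t*b + t\<^sup>2 * N"
    using assms[rule_format, of t] unfolding norm_minus_scale_sq b_def N_def .
  hence h: "0 \<le> - 2*t*b + t\<^sup>2 * N" by linarith
  have N1: "N + 1 \<noteq> 0" using N0 by simp
  have bt: "b = t * (N + 1)" using N1 unfolding t_def by simp
  have "- 2*t*b + t\<^sup>2 * N = - (t\<^sup>2 * (N + 2))"
    unfolding bt by (simp add: algebra_simps power2_eq_square)
  with h have "t\<^sup>2 * (N + 2) \<le> 0" by simp
  moreover have "0 < N + 2" using N0 by simp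
  ultimately have "t\<^sup>2 \<le> 0" by (simp add: mult_le_0_iff)
  hence "t = 0" by simp
  thus ?thesis unfolding b_def[symmetric] bt by simp
qed

lemma proj_exists:
  fixes M :: "'a::{real_inner,complete_space} set"
  assumes sub: "lsub M" and cl: "closed M"
  shows "\<exists>p\<in>M. \<forall>v\<in>M. inner (y - p) v = 0"
proof -
  have M0: "0 \<in> M" and Madd: "\<And>u v. u \<in> M \<Longrightarrow> v \<in> M \<Longrightarrow> u + v \<in> M"
    and Msc: "\<And>c u. u \<in> M \<Longrightarrow> c *\<^sub>R u \<in> M" using sub unfolding lsub_def by auto
  define S where "S = (\<lambda>c. (norm (y - c))\<^sup>2) ` M"
  define d where "d = Inf S"
  have Sne: "S \<noteq> {}" using M0 by (auto simp: S_def)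
  have Sbdd: "bdd_below S" unfolding S_def by (rule bdd_belowI[of _ 0]) auto
  have dle: "\<And>c. c \<in> M \<Longrightarrow> d \<le> (norm (y - c))\<^sup>2"
    unfolding d_def by (rule cInf_lower[OF _ Sbdd]) (auto simp: S_def)
  have "\<forall>n. \<exists>c. c \<in> M \<and> (norm (y - c))\<^sup>2 < d + inverse (real (Suc n))"
  proof
    fix n
    have "Inf S < d + inverse (real (Suc n))" unfolding d_def by simp
    from cInf_lessD[OF Sne this] show "\<exists>c. c \<in> M \<and> (norm (y - c))\<^sup>2 < d + inverse (real (Suc n))"
      by (auto simp: S_def)
  qed
  then obtain c where c: "\<And>n. c n \<in> M" "\<And>n. (norm (y - c n))\<^sup>2 < d + inverse (real (Suc n))"
    by metis
  have dist_bd: "(norm (c m - c n))\<^sup>2 \<le> 2 * inverse (real (Suc m)) + 2 * inverse (real (Suc n))" for m n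
  proof -
    have mid: "(1/2) *\<^sub>R (c m + c n) \<in> M" using c(1) by (intro Msc Madd)
    have e1: "(y - c m) - (y - c n) = c n - c m" by simp
    have e2: "(y - c m) + (y - c n) = 2 *\<^sub>R (y - (1/2) *\<^sub>R (c m + c n))" by (simp add: algebra_simps scaleR_2)
    have "(norm ((y - c m) + (y - c n)))\<^sup>2 = 4 * (norm (y - (1/2) *\<^sub>R (c m + c n)))\<^sup>2"
      unfolding e2 by (simp add: power_mult_distrib)
    also have "\<dots> \<ge> 4 * d" using dle[OF mid] by simp
    finally have "4 * d \<le> (norm ((y - c m) + (y - c n)))\<^sup>2" .
    moreover have "(norm (c n - c m))\<^sup>2 = 2*(norm (y - c m))\<^sup>2 + 2*(norm (y - c n))\<^sup>2 - (norm ((y - c m) + (y - c n)))\<^sup>2"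
      using parallelogram[of "y - c m" "y - c n"] unfolding e1 .
    moreover have "(norm (c m - c n))\<^sup>2 = (norm (c n - c m))\<^sup>2" by (simp add: norm_minus_commute)
    ultimately show ?thesis using c(2)[of m] c(2)[of n] by linarith
  qed
  have "Cauchy c"
    unfolding Cauchy_def
  proof (intro allI impI)
    fix e :: real assume e: "0 < e"
    have "0 < e\<^sup>2 / 4" using e by simp
    from ex_inverse_of_nat_less[OF this] obtain N :: nat where N: "0 < N" "inverse (real N) < e\<^sup>2 / 4" by blast
    show "\<exists>M. \<forall>m\<ge>M. \<forall>n\<ge>M. dist (c m) (c n) < e"
    proof (intro exI allI impI)
      fix m n assume mn: "N \<le> m" "N \<le> n"
      have "inverse (real (Suc m)) \<le> inverse (real N)" using mn N by (simp add: le_imp_inverse_le)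
      moreover have "inverse (real (Suc n)) \<le> inverse (real N)" using mn N by (simp add: le_imp_inverse_le)
      ultimately have "(norm (c m - c n))\<^sup>2 < e\<^sup>2" using dist_bd[of m n] N by linarith
      hence "norm (c m - c n) < e" using e by (simp add: power_less_imp_less_base less_imp_le)
      thus "dist (c m) (c n) < e" by (simp add: dist_norm)
    qed
  qed
  then obtain p where p: "c \<longlonglongrightarrow> p" using Cauchy_convergent_iff convergent_def by blast
  have pM: "p \<in> M" using closed_sequentially[OF cl c(1) p] .
  have lim1: "(\<lambda>n. (norm (y - c n))\<^sup>2) \<longlonglongrightarrow> (norm (y - p))\<^sup>2"
    by (intro tendsto_intros p)
  have lim2: "(\<lambda>n. d + inverse (real (Suc n))) \<longlonglongrightarrow> d + 0"
    by (intro tendsto_intros LIMSEQ_inverse_real_of_nat)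
  have "(norm (y - p))\<^sup>2 \<le> d + 0"
    by (rule LIMSEQ_le[OF lim1 lim2]) (use c(2) less_imp_le in blast)
  hence pd: "(norm (y - p))\<^sup>2 \<le> d" by simp
  have pmin: "\<And>u. u \<in> M \<Longrightarrow> (norm (y - p))\<^sup>2 \<le> (norm (y - u))\<^sup>2"
    using pd dle by (meson order_trans)
  show ?thesis
  proof (intro bexI[OF _ pM] ballI)
    fix v assume v: "v \<in> M"
    show "inner (y - p) v = 0"
    proof (rule orth_from_min, rule allI)
      fix t
      have "p + t *\<^sub>R v \<in> M" using pM v by (intro Madd Msc)
      from pmin[OF this] show "(norm (y - p))\<^sup>2 \<le> (norm (y - p - t *\<^sub>R v))\<^sup>2" by (simp add: algebra_simps)
    qed
  qed
qed

lemma bdd_real_subseq: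
  fixes f :: "nat \<Rightarrow> real"
  assumes "\<forall>n. \<bar>f n\<bar> \<le> K"
  shows "\<exists>r. strict_mono r \<and> convergent (\<lambda>n. f (r n))"
proof -
  obtain r where r: "strict_mono r" "monoseq (\<lambda>n. f (r n))" using seq_monosub by blast
  have "Bseq (\<lambda>n. f (r n))" by (rule BseqI'[of _ K]) (use assms in auto)
  thus ?thesis using r Bseq_monoseq_convergent by blast
qed

lemma inner_bd:
  fixes a w :: "'a::real_inner"
  assumes "norm a \<le> B"
  shows "\<bar>inner a w\<bar> \<le> B * norm w"
proof -
  have "\<bar>inner a w\<bar> \<le> norm a * norm w" by (rule Cauchy_Schwarz_ineq2)
  also have "\<dots> \<le> B * norm w" using assms by (intro mult_right_mono) auto
  finally show ?thesis .
qed

lemma weak_compact: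
  fixes x :: "nat \<Rightarrow> 'a::{real_inner,complete_space}"
  assumes bd: "\<forall>n. norm (x n) \<le> B"
  shows "\<exists>r w. strict_mono r \<and> weakly_converges (x \<circ> r) w"
proof -
  have B0: "0 \<le> B" using bd norm_ge_zero order_trans by blast
  define P where "P = (\<lambda>k (s::nat\<Rightarrow>nat). convergent (\<lambda>j. inner (x (s j)) (x k)))"
  interpret subseqs P
  proof
    fix k and s :: "nat \<Rightarrow> nat" assume s: "strict_mono s"
    have "\<forall>j. \<bar>inner (x (s j)) (x k)\<bar> \<le> B * B"
    proof
      fix j
      have "\<bar>inner (x (s j)) (x k)\<bar> \<le> B * norm (x k)" using bd by (intro inner_bd) auto
      also have "\<dots> \<le> B * B" using bd B0 by (intro mult_left_mono) auto
      finally show "\<bar>inner (x (s j)) (x k)\<bar> \<le> B * B" .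
    qed
    from bdd_real_subseq[OF this] obtain r' where "strict_mono r'" "convergent (\<lambda>n. inner (x (s (r' n))) (x k))"
      by blast
    thus "\<exists>r'. strict_mono r' \<and> P k (s \<circ> r')" by (auto simp: P_def o_def)
  qed
  define r where "r = diagseq"
  have r: "strict_mono r" unfolding r_def by (rule subseq_diagseq)
  have conv: "convergent (\<lambda>j. inner (x (r j)) (x k))" for k
  proof -
    have "P k (diagseq \<circ> ((+) (Suc k)))"
    proof (rule diagseq_holds)
      fix r' s n assume "strict_mono (r'::nat\<Rightarrow>nat)" "P n s"
      then obtain L where "(\<lambda>j. inner (x (s j)) (x n)) \<longlonglongrightarrow> L" unfolding P_def convergent_def by blast
      from LIMSEQ_subseq_LIMSEQ[OF this \<open>strict_mono r'\<close>]
      show "P n (s \<circ> r')" unfolding P_def convergent_def by (auto simp: o_def)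
    qed
    then obtain L where "(\<lambda>j. inner (x (diagseq (Suc k + j))) (x k)) \<longlonglongrightarrow> L"
      unfolding P_def convergent_def by (auto simp: o_def)
    hence "(\<lambda>j. inner (x (diagseq (j + Suc k))) (x k)) \<longlonglongrightarrow> L" by (simp add: add.commute)
    hence "(\<lambda>j. inner (x (diagseq j)) (x k)) \<longlonglongrightarrow> L" by (rule LIMSEQ_offset)
    thus ?thesis unfolding r_def convergent_def by blast
  qed
  define S where "S = {v. convergent (\<lambda>j. inner (x (r j)) v)}"
  have subS: "lsub S" unfolding lsub_def S_def
  proof (intro conjI ballI allI; clarsimp)
    show "convergent (\<lambda>j. 0::real)" by (rule convergent_const)
  next
    fix u v assume "convergent (\<lambda>j. inner (x (r j)) u)" "convergent (\<lambda>j. inner (x (r j)) v)"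
    from convergent_add[OF this] show "convergent (\<lambda>j. inner (x (r j)) (u + v))" by (simp add: inner_add_right)
  next
    fix c and u :: 'a assume "convergent (\<lambda>j. inner (x (r j)) u)"
    then obtain L where "(\<lambda>j. inner (x (r j)) u) \<longlonglongrightarrow> L" unfolding convergent_def by blast
    from tendsto_mult_left[OF this, of c] show "convergent (\<lambda>j. c * inner (x (r j)) u)"
      unfolding convergent_def by blast
  qed
  have clS: "closed S" unfolding closed_sequential_limits
  proof (intro allI impI, elim conjE)
    fix v :: "nat \<Rightarrow> 'a" and l assume vS: "\<forall>n. v n \<in> S" and vl: "v \<longlonglongrightarrow> l"
    have "Cauchy (\<lambda>j. inner (x (r j)) l)" unfolding Cauchy_def
    proof (intro allI impI)
      fix e :: real assume e: "0 < e"
      define B' where "B' = B + 1"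
      have B': "0 < B'" using B0 by (simp add: B'_def)
      obtain n where n: "norm (v n - l) < e / (3 * B')"
        using LIMSEQ_D[OF vl, of "e/(3*B')"] e B' by auto
      have "Cauchy (\<lambda>j. inner (x (r j)) (v n))" using vS unfolding S_def Cauchy_convergent_iff by blast
      then obtain M where M: "\<forall>i\<ge>M. \<forall>j\<ge>M. dist (inner (x (r i)) (v n)) (inner (x (r j)) (v n)) < e/3"
        unfolding Cauchy_def using e by (meson divide_pos_pos zero_less_numeral)
      show "\<exists>M. \<forall>i\<ge>M. \<forall>j\<ge>M. dist (inner (x (r i)) l) (inner (x (r j)) l) < e"
      proof (intro exI allI impI)
        fix i j assume ij: "M \<le> i" "M \<le> j"
        have bdn: "B * norm (l - v n) \<le> e/3"
        proof -
          have "B * norm (l - v n) \<le> B' * norm (l - v n)" unfolding B'_def by (simp add: algebra_simps)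
          also have "\<dots> \<le> B' * (e / (3 * B'))" using n B' by (intro mult_left_mono) (auto simp: norm_minus_commute)
          also have "\<dots> = e/3" using B' by simp
          finally show ?thesis .
        qed
        have t1: "\<bar>inner (x (r i)) (l - v n)\<bar> \<le> e/3" using inner_bd[of "x (r i)" B "l - v n"] bd bdn by simp
        have t2: "\<bar>inner (x (r j)) (l - v n)\<bar> \<le> e/3" using inner_bd[of "x (r j)" B "l - v n"] bd bdn by simp
        have t3: "\<bar>inner (x (r i)) (v n) - inner (x (r j)) (v n)\<bar> < e/3" using M ij by (simp add: dist_real_def)
        have "inner (x (r i)) l - inner (x (r j)) l =
              inner (x (r i)) (l - v n) + (inner (x (r i)) (v n) - inner (x (r j)) (v n)) - inner (x (r j)) (l - v n)"
          by (simp add: inner_diff_right)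
        hence "\<bar>inner (x (r i)) l - inner (x (r j)) l\<bar> < e" using t1 t2 t3 by linarith
        thus "dist (inner (x (r i)) l) (inner (x (r j)) l) < e" by (simp add: dist_real_def)
      qed
    qed
    thus "l \<in> S" unfolding S_def Cauchy_convergent_iff by simp
  qed
  have allS: "convergent (\<lambda>j. inner (x (r j)) y)" for y
  proof -
    obtain p where p: "p \<in> S" "\<forall>v\<in>S. inner (y - p) v = 0" using proj_exists[OF subS clS] by blast
    have "inner (x (r j)) y = inner (x (r j)) p" for j
    proof -
      have "x (r j) \<in> S" using conv unfolding S_def by simp
      hence "inner (y - p) (x (r j)) = 0" using p by blast
      thus ?thesis by (simp add: inner_diff_left inner_commute)
    qed
    thus ?thesis using p(1) unfolding S_def by simp
  qed
  define f where "f y = lim (\<lambda>j. inner (x (r j)) y)" for y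
  have flim: "(\<lambda>j. inner (x (r j)) y) \<longlonglongrightarrow> f y" for y
    unfolding f_def using allS convergent_LIMSEQ_iff by blast
  have fadd: "f (u + v) = f u + f v" for u v
  proof -
    have "(\<lambda>j. inner (x (r j)) (u + v)) \<longlonglongrightarrow> f u + f v"
      using tendsto_add[OF flim[of u] flim[of v]] by (simp add: inner_add_right)
    thus ?thesis using flim LIMSEQ_unique by blast
  qed
  have fscale: "f (c *\<^sub>R u) = c * f u" for c u
  proof -
    have "(\<lambda>j. inner (x (r j)) (c *\<^sub>R u)) \<longlonglongrightarrow> c * f u"
      using tendsto_mult_left[OF flim[of u], of c] by simp
    thus ?thesis using flim LIMSEQ_unique by blast
  qed
  have fdiff: "f (u - v) = f u - f v" for u v
    using fadd[of "u - v" v] by simp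
  have f0: "f 0 = 0" using fscale[of 0 0] by simp
  have fbd: "\<bar>f y\<bar> \<le> B * norm y" for y
  proof -
    have "(\<lambda>j. \<bar>inner (x (r j)) y\<bar>) \<longlonglongrightarrow> \<bar>f y\<bar>" by (intro tendsto_intros flim)
    moreover have "\<forall>j. \<bar>inner (x (r j)) y\<bar> \<le> B * norm y" using bd inner_bd by blast
    ultimately show ?thesis by (intro LIMSEQ_le_const2) auto
  qed
  have riesz: "\<exists>w. \<forall>y. f y = inner w y"
  proof (cases "\<forall>u. f u = 0")
    case True thus ?thesis by (intro exI[of _ 0]) simp
  next
    case False
    then obtain u where fu: "f u \<noteq> 0" by blast
    define N where "N = {v. f v = 0}"
    have subN: "lsub N" unfolding lsub_def N_def using f0 fadd fscale by auto
    have clN: "closed N" unfolding closed_sequential_limits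
    proof (intro allI impI, elim conjE)
      fix v :: "nat \<Rightarrow> 'a" and l assume vN: "\<forall>n. v n \<in> N" and vl: "v \<longlonglongrightarrow> l"
      have lim0: "(\<lambda>n. B * norm (v n - l)) \<longlonglongrightarrow> B * 0"
        by (intro tendsto_intros) (use vl in \<open>simp add: LIM_zero_iff tendsto_norm_zero\<close>)
      have "\<forall>n. \<bar>f l\<bar> \<le> B * norm (v n - l)"
      proof
        fix n
        have "f l = - f (v n - l)" using vN fdiff[of "v n" l] unfolding N_def by simp
        thus "\<bar>f l\<bar> \<le> B * norm (v n - l)" using fbd[of "v n - l"] by simp
      qed
      hence "\<bar>f l\<bar> \<le> B * 0" by (intro LIMSEQ_le_const[OF lim0]) auto
      thus "l \<in> N" unfolding N_def by simp
    qed
    obtain p where p: "p \<in> N" "\<forall>v\<in>N. inner (u - p) v = 0" using proj_exists[OF subN clN] by blast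
    define y0 where "y0 = u - p"
    have fy0: "f y0 = f u" using p(1) fdiff unfolding y0_def N_def by simp
    have y0ne: "y0 \<noteq> 0" using fy0 fu f0 by auto
    have iy0: "inner y0 y0 > 0" using y0ne by simp
    define w where "w = (f y0 / inner y0 y0) *\<^sub>R y0"
    show ?thesis
    proof (intro exI allI)
      fix y
      have "y - (f y / f y0) *\<^sub>R y0 \<in> N" unfolding N_def using fy0 fu fdiff fscale by simp
      hence "inner y0 (y - (f y / f y0) *\<^sub>R y0) = 0" using p(2) unfolding y0_def by blast
      hence "inner y0 y = (f y / f y0) * inner y0 y0" by (simp add: inner_diff_right)
      thus "f y = inner w y" using iy0 fy0 fu unfolding w_def by (simp add: field_simps)
    qed
  qed
  then obtain w where w: "\<forall>y. f y = inner w y" by blast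
  have "weakly_converges (x \<circ> r) w" unfolding weakly_converges_def
    using flim w by (simp add: o_def)
  thus ?thesis using r by blast
qed

lemma weak_sub:
  assumes "weakly_converges a w" "strict_mono t"
  shows "weakly_converges (a \<circ> t) w"
  unfolding weakly_converges_def
proof (intro allI)
  fix y
  have "(\<lambda>n. inner (a n) y) \<longlonglongrightarrow> inner w y" using assms(1) unfolding weakly_converges_def by blast
  from LIMSEQ_subseq_LIMSEQ[OF this assms(2)] show "(\<lambda>n. inner ((a \<circ> t) n) y) \<longlonglongrightarrow> inner w y"
    by (simp add: o_def)
qed

lemma weak_diff0:
  assumes "weakly_converges a w"
  shows "(\<lambda>j. inner (a j - w) v) \<longlonglongrightarrow> 0"
proof -
  have "(\<lambda>j. inner (a j) v) \<longlonglongrightarrow> inner w v" using assms unfolding weakly_converges_def by blast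
  from tendsto_diff[OF this tendsto_const[of "inner w v"]]
  have "(\<lambda>j. inner (a j) v - inner w v) \<longlonglongrightarrow> inner w v - inner w v" .
  thus ?thesis by (simp add: inner_diff_left)
qed

lemma sq_expand:
  fixes a w u :: "'a::real_inner"
  shows "(norm (a - u))\<^sup>2 = (norm (a - w))\<^sup>2 + 2 * inner (a - w) (w - u) + (norm (w - u))\<^sup>2"
  unfolding power2_norm_eq_inner
  by (simp add: inner_diff_left inner_diff_right inner_commute algebra_simps)

lemma tri:
  fixes a b c :: "'a::real_normed_vector"
  shows "norm (a - c) \<le> norm (a - b) + norm (b - c)"
proof -
  have "a - c = (a - b) + (b - c)" by simp
  thus ?thesis by (metis norm_triangle_ineq)
qed

locale KMloc =
  fixes R :: "'a::{real_inner,complete_space} \<Rightarrow> 'a" and mu :: "nat \<Rightarrow> real" and x :: "nat \<Rightarrow> 'a"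
  assumes neR: "nonexpansive R"
    and mu: "\<And>n. 0 < mu n \<and> mu n < 1"
    and div: "filterlim (\<lambda>N. \<Sum>n<N. mu n * (1 - mu n)) at_top sequentially"
    and it: "\<And>n. x (Suc n) = x n + mu n *\<^sub>R (R (x n) - x n)"
begin

lemma Rne: "norm (R a - R b) \<le> norm (a - b)" using neR unfolding nonexpansive_def by blast

lemma fejer_sq:
  assumes z: "R z = z"
  shows "(norm (x (Suc n) - z))\<^sup>2 + mu n * (1 - mu n) * (norm (x n - R (x n)))\<^sup>2 \<le> (norm (x n - z))\<^sup>2"
proof -
  have e: "x (Suc n) - z = (1 - mu n) *\<^sub>R (x n - z) + mu n *\<^sub>R (R (x n) - z)"
    by (simp add: it algebra_simps)
  have "(norm (x (Suc n) - z))\<^sup>2 = (1 - mu n) * (norm (x n - z))\<^sup>2 + mu n * (norm (R (x n) - z))\<^sup>2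
        - mu n * (1 - mu n) * (norm ((x n - z) - (R (x n) - z)))\<^sup>2"
    unfolding e by (rule norm_combo)
  also have "(x n - z) - (R (x n) - z) = x n - R (x n)" by simp
  finally have id: "(norm (x (Suc n) - z))\<^sup>2 = (1 - mu n) * (norm (x n - z))\<^sup>2 + mu n * (norm (R (x n) - z))\<^sup>2
        - mu n * (1 - mu n) * (norm (x n - R (x n)))\<^sup>2" .
  have "norm (R (x n) - z) \<le> norm (x n - z)" using Rne[of "x n" z] z by simp
  hence "(norm (R (x n) - z))\<^sup>2 \<le> (norm (x n - z))\<^sup>2" by (simp add: power_mono)
  hence "mu n * (norm (R (x n) - z))\<^sup>2 \<le> mu n * (norm (x n - z))\<^sup>2" using mu[of n] by (intro mult_left_mono) auto
  thus ?thesis using id by (simp add: algebra_simps)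
qed

lemma fejer:
  assumes z: "R z = z"
  shows "norm (x (Suc n) - z) \<le> norm (x n - z)"
proof -
  have "0 \<le> mu n * (1 - mu n) * (norm (x n - R (x n)))\<^sup>2" using mu[of n] by simp
  hence "(norm (x (Suc n) - z))\<^sup>2 \<le> (norm (x n - z))\<^sup>2" using fejer_sq[OF z, of n] by linarith
  thus ?thesis by (rule sq_le_imp_norm_le)
qed

lemma fejer0:
  assumes z: "R z = z"
  shows "norm (x n - z) \<le> norm (x 0 - z)"
proof (induction n)
  case (Suc n) thus ?case using fejer[OF z, of n] by linarith
qed simp

lemma telescope:
  assumes z: "R z = z"
  shows "(\<Sum>n<N. mu n * (1 - mu n) * (norm (x n - R (x n)))\<^sup>2) \<le> (norm (x 0 - z))\<^sup>2 - (norm (x N - z))\<^sup>2"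
proof (induction N)
  case (Suc N) thus ?case using fejer_sq[OF z, of N] by simp
qed simp

lemma dmono: "norm (x (Suc n) - R (x (Suc n))) \<le> norm (x n - R (x n))"
proof -
  have e: "x (Suc n) - R (x (Suc n)) = (1 - mu n) *\<^sub>R (x n - R (x n)) + (R (x n) - R (x (Suc n)))"
    by (simp add: it algebra_simps)
  have "norm (x (Suc n) - R (x (Suc n))) \<le> norm ((1 - mu n) *\<^sub>R (x n - R (x n))) + norm (R (x n) - R (x (Suc n)))"
    unfolding e by (rule norm_triangle_ineq)
  also have "norm ((1 - mu n) *\<^sub>R (x n - R (x n))) = (1 - mu n) * norm (x n - R (x n))"
    using mu[of n] by simp
  also have "norm (R (x n) - R (x (Suc n))) \<le> norm (x n - x (Suc n))" by (rule Rne)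
  also have "x n - x (Suc n) = - (mu n *\<^sub>R (R (x n) - x n))" by (simp add: it)
  also have "norm (- (mu n *\<^sub>R (R (x n) - x n))) = mu n * norm (x n - R (x n))"
    using mu[of n] by (simp add: norm_minus_commute)
  finally show ?thesis by (simp add: algebra_simps)
qed

lemma dmono': "m \<le> n \<Longrightarrow> norm (x n - R (x n)) \<le> norm (x m - R (x m))"
proof (induction n)
  case (Suc n) thus ?case using dmono[of n] by (cases "m = Suc n") auto
qed simp

lemma asreg:
  assumes z: "R z = z"
  shows "(\<lambda>n. norm (x n - R (x n))) \<longlonglongrightarrow> 0"
  unfolding LIMSEQ_iff
proof (intro allI impI)
  fix r :: real assume r: "0 < r"
  define K where "K = (norm (x 0 - z))\<^sup>2"
  have "eventually (\<lambda>N. K / r\<^sup>2 + 1 \<le> (\<Sum>n<N. mu n * (1 - mu n))) sequentially"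
    using div unfolding filterlim_at_top by blast
  then obtain N0 where N0: "\<And>N. N \<ge> N0 \<Longrightarrow> K / r\<^sup>2 + 1 \<le> (\<Sum>n<N. mu n * (1 - mu n))"
    unfolding eventually_sequentially by blast
  show "\<exists>no. \<forall>n\<ge>no. norm (norm (x n - R (x n)) - 0) < r"
  proof (intro exI allI impI)
    fix N assume N: "N0 \<le> N"
    show "norm (norm (x N - R (x N)) - 0) < r"
    proof (rule ccontr)
      assume "\<not> ?thesis"
      hence ge: "r \<le> norm (x N - R (x N))" by simp
      have ge2: "r\<^sup>2 \<le> (norm (x n - R (x n)))\<^sup>2" if "n \<le> N" for n
      proof -
        have "r \<le> norm (x n - R (x n))" using ge dmono'[OF that] by linarith
        thus ?thesis using r by (simp add: power_mono)
      qed
      have "r\<^sup>2 * (\<Sum>n<N. mu n * (1 - mu n)) = (\<Sum>n<N. mu n * (1 - mu n) * r\<^sup>2)"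
        by (simp add: sum_distrib_left algebra_simps)
      also have "\<dots> \<le> (\<Sum>n<N. mu n * (1 - mu n) * (norm (x n - R (x n)))\<^sup>2)"
      proof (rule sum_mono)
        fix n assume "n \<in> {..<N}"
        hence "r\<^sup>2 \<le> (norm (x n - R (x n)))\<^sup>2" using ge2 by simp
        moreover have "0 \<le> mu n * (1 - mu n)" using mu[of n] by simp
        ultimately show "mu n * (1 - mu n) * r\<^sup>2 \<le> mu n * (1 - mu n) * (norm (x n - R (x n)))\<^sup>2"
          by (rule mult_left_mono)
      qed
      also have "\<dots> \<le> K" using telescope[OF z, of N] zero_le_power2[of "norm (x N - z)"] unfolding K_def by linarith
      finally have A: "r\<^sup>2 * (\<Sum>n<N. mu n * (1 - mu n)) \<le> K" .
      have r2: "0 < r\<^sup>2" using r by simp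
      have "r\<^sup>2 * (K / r\<^sup>2 + 1) \<le> r\<^sup>2 * (\<Sum>n<N. mu n * (1 - mu n))"
        using N0[OF N] r2 by (intro mult_left_mono) auto
      moreover have "r\<^sup>2 * (K / r\<^sup>2 + 1) = K + r\<^sup>2" using r2 by (simp add: field_simps)
      ultimately show False using A r2 by linarith
    qed
  qed
qed

lemma demiclosed:
  assumes z: "R z = z" and s: "strict_mono s" and wc: "weakly_converges (x \<circ> s) w"
  shows "R w = w"
proof -
  define a where "a j = x (s j)" for j
  define C where "C = norm (x 0 - z) + norm z + norm w"
  have rho: "norm (a j - w) \<le> C" for j
  proof -
    have "norm (a j - w) \<le> norm (a j - z) + norm (z - w)" by (rule tri)
    also have "norm (a j - z) \<le> norm (x 0 - z)" unfolding a_def by (rule fejer0[OF z])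
    also have "norm (z - w) \<le> norm z + norm w" by (rule norm_triangle_ineq4)
    finally show ?thesis unfolding C_def by simp
  qed
  have d0: "(\<lambda>j. norm (a j - R (a j))) \<longlonglongrightarrow> 0"
    using LIMSEQ_subseq_LIMSEQ[OF asreg[OF z] s] unfolding a_def by (simp add: o_def)
  have e0: "(\<lambda>j. inner (a j - w) (w - R w)) \<longlonglongrightarrow> 0"
    using weak_diff0[OF wc] unfolding a_def by (simp add: o_def)
  define D where "D = (norm (w - R w))\<^sup>2"
  have bound: "D \<le> (norm (a j - R (a j)))\<^sup>2 + 2 * C * norm (a j - R (a j)) - 2 * inner (a j - w) (w - R w)" for j
  proof -
    define dj where "dj = norm (a j - R (a j))"
    define rj where "rj = norm (a j - w)"
    have dj0: "0 \<le> dj" by (simp add: dj_def)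
    have "norm (a j - R w) \<le> norm (a j - R (a j)) + norm (R (a j) - R w)"
      by (rule tri)
    also have "norm (R (a j) - R w) \<le> norm (a j - w)" by (rule Rne)
    finally have "norm (a j - R w) \<le> dj + rj" unfolding dj_def rj_def by simp
    hence "(norm (a j - R w))\<^sup>2 \<le> (dj + rj)\<^sup>2" by (simp add: power_mono)
    moreover have "(norm (a j - R w))\<^sup>2 = rj\<^sup>2 + 2 * inner (a j - w) (w - R w) + D"
      unfolding rj_def D_def by (rule sq_expand)
    moreover have "dj * rj \<le> dj * C" using rho[of j] dj0 unfolding rj_def by (intro mult_left_mono) auto
    ultimately show ?thesis unfolding dj_def[symmetric] by (simp add: power2_eq_square algebra_simps)
  qed
  have "(\<lambda>j. (norm (a j - R (a j)))\<^sup>2 + 2 * C * norm (a j - R (a j)) - 2 * inner (a j - w) (w - R w))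
        \<longlonglongrightarrow> 0\<^sup>2 + 2 * C * 0 - 2 * 0"
    by (intro tendsto_intros d0 e0)
  hence "D \<le> 0\<^sup>2 + 2 * C * 0 - 2 * 0" using bound by (intro LIMSEQ_le_const) auto
  hence "D = 0" unfolding D_def by simp
  thus ?thesis unfolding D_def by simp
qed

lemma bounded_x:
  assumes z: "R z = z"
  shows "norm (x n) \<le> norm (x 0 - z) + norm z"
proof -
  have "norm (x n) \<le> norm (x n - z) + norm z" using tri[of "x n" 0 z] by (simp only: diff_zero)
  thus ?thesis using fejer0[OF z, of n] by linarith
qed

lemma conv_sq:
  assumes z: "R z = z"
  shows "\<exists>L. (\<lambda>n. (norm (x n - z))\<^sup>2) \<longlonglongrightarrow> L"
proof -
  have "decseq (\<lambda>n. (norm (x n - z))\<^sup>2)"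
    by (rule decseq_SucI) (use fejer[OF z] in \<open>simp add: power_mono\<close>)
  moreover have "\<forall>i. 0 \<le> (norm (x i - z))\<^sup>2" by simp
  ultimately obtain L where "(\<lambda>n. (norm (x n - z))\<^sup>2) \<longlonglongrightarrow> L" by (rule decseq_convergent)
  thus ?thesis by blast
qed

lemma opial_pair:
  assumes w1: "R w1 = w1" and w2: "R w2 = w2"
    and s: "strict_mono s" and c: "weakly_converges (x \<circ> s) w1"
    and L1: "(\<lambda>n. (norm (x n - w1))\<^sup>2) \<longlonglongrightarrow> L1" and L2: "(\<lambda>n. (norm (x n - w2))\<^sup>2) \<longlonglongrightarrow> L2"
  shows "L2 = L1 + (norm (w1 - w2))\<^sup>2"
proof -
  have "(\<lambda>j. (norm (x (s j) - w1))\<^sup>2 + 2 * inner (x (s j) - w1) (w1 - w2) + (norm (w1 - w2))\<^sup>2)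
        \<longlonglongrightarrow> L1 + 2 * 0 + (norm (w1 - w2))\<^sup>2"
    using LIMSEQ_subseq_LIMSEQ[OF L1 s] weak_diff0[OF c, of "w1 - w2"]
    by (intro tendsto_intros) (auto simp: o_def)
  moreover have "(\<lambda>j. (norm (x (s j) - w2))\<^sup>2) \<longlonglongrightarrow> L2"
    using LIMSEQ_subseq_LIMSEQ[OF L2 s] by (simp add: o_def)
  moreover have "(norm (x (s j) - w2))\<^sup>2 = (norm (x (s j) - w1))\<^sup>2 + 2 * inner (x (s j) - w1) (w1 - w2) + (norm (w1 - w2))\<^sup>2" for j
    by (rule sq_expand)
  ultimately show ?thesis using LIMSEQ_unique by fastforce
qed

theorem KM_weak:
  assumes z: "R z = z"
  shows "\<exists>w. R w = w \<and> weakly_converges x w"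
proof -
  define B where "B = norm (x 0 - z) + norm z"
  have bd: "\<forall>n. norm (x n) \<le> B" using bounded_x[OF z] unfolding B_def by blast
  obtain s w where s: "strict_mono s" and sw: "weakly_converges (x \<circ> s) w" using weak_compact[OF bd] by blast
  have Rw: "R w = w" by (rule demiclosed[OF z s sw])
  have "weakly_converges x w" unfolding weakly_converges_def
  proof (rule allI, rule ccontr)
    fix y assume nc: "\<not> (\<lambda>n. inner (x n) y) \<longlonglongrightarrow> inner w y"
    then obtain r where r: "0 < r" and fr: "\<forall>no. \<exists>n\<ge>no. \<not> norm (inner (x n) y - inner w y) < r"
      unfolding LIMSEQ_iff by blast
    define P where "P = {n. r \<le> \<bar>inner (x n) y - inner w y\<bar>}"
    have infP: "infinite P" unfolding infinite_nat_iff_unbounded_le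
    proof
      fix m0
      obtain n where "n \<ge> m0" "\<not> norm (inner (x n) y - inner w y) < r" using fr by blast
      hence "n \<ge> m0" "n \<in> P" unfolding P_def by (auto simp: real_norm_def)
      thus "\<exists>n\<ge>m0. n \<in> P" by blast
    qed
    from infinite_enumerate[OF infP] obtain t :: "nat \<Rightarrow> nat" where t: "strict_mono t" "\<forall>n. t n \<in> P" by auto
    have bd2: "\<forall>n. norm ((x \<circ> t) n) \<le> B" using bd by simp
    obtain t2 w' where t2: "strict_mono t2" and tw: "weakly_converges ((x \<circ> t) \<circ> t2) w'"
      using weak_compact[OF bd2] by blast
    have st: "strict_mono (t \<circ> t2)" using t(1) t2 by (rule strict_mono_o)
    have tw': "weakly_converges (x \<circ> (t \<circ> t2)) w'" using tw by (simp add: o_assoc)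
    have Rw': "R w' = w'" by (rule demiclosed[OF z st tw'])
    have "r \<le> \<bar>inner w' y - inner w y\<bar>"
    proof (rule LIMSEQ_le_const)
      have "(\<lambda>j. inner (x (t (t2 j))) y) \<longlonglongrightarrow> inner w' y"
        using tw' unfolding weakly_converges_def by (simp add: o_def)
      from tendsto_rabs[OF tendsto_diff[OF this tendsto_const[of "inner w y"]]]
      show "(\<lambda>j. \<bar>inner (x (t (t2 j))) y - inner w y\<bar>) \<longlonglongrightarrow> \<bar>inner w' y - inner w y\<bar>" .
      show "\<exists>N. \<forall>n\<ge>N. r \<le> \<bar>inner (x (t (t2 n))) y - inner w y\<bar>" using t(2) unfolding P_def by blast
    qed
    hence ne: "w' \<noteq> w" using r by auto
    obtain L1 where L1: "(\<lambda>n. (norm (x n - w))\<^sup>2) \<longlonglongrightarrow> L1" using conv_sq[OF Rw] by blast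
    obtain L2 where L2: "(\<lambda>n. (norm (x n - w'))\<^sup>2) \<longlonglongrightarrow> L2" using conv_sq[OF Rw'] by blast
    have "L2 = L1 + (norm (w - w'))\<^sup>2" by (rule opial_pair[OF Rw Rw' s sw L1 L2])
    moreover have "L1 = L2 + (norm (w' - w))\<^sup>2" by (rule opial_pair[OF Rw' Rw st tw' L2 L1])
    moreover have "norm (w' - w) = norm (w - w')" by (rule norm_minus_commute)
    ultimately have "(norm (w - w'))\<^sup>2 = 0" by simp
    thus False using ne by simp
  qed
  thus ?thesis using Rw by blast
qed

end

lemma chain_eq:
  "comp_chain T ix m = foldr (\<circ>) (map T (map ix [1..<m+1])) id"
  unfolding comp_chain_def by (simp add: map_map comp_def)

lemma set_chain: "set (map ix [1..<m+1]) = ix ` {1..m}"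
  by (auto simp: atLeastLessThanSuc_atLeastAtMost)

lemma sum_chain:
  "sum_list (map f (map ix [1..<m+1])) = (\<Sum>i=1..m. f (ix i))"
proof -
  have "sum_list (map f (map ix [1..<m+1])) = sum_list (map (\<lambda>i. f (ix i)) [1..<m+1])"
    by (simp only: map_map comp_def)
  also have "\<dots> = sum (\<lambda>i. f (ix i)) (set [1..<m+1])" by (rule interv_sum_list_conv_sum_set_nat)
  also have "set [1..<m+1] = {1..m}" by auto
  finally show ?thesis .
qed

theorem proposition3p1:
  fixes T :: "'i \<Rightarrow> 'a::{real_inner, complete_space} \<Rightarrow> 'a"
    and I :: "'i set" and a :: "'i \<Rightarrow> real"
    and p :: nat and m :: "nat \<Rightarrow> nat" and \<omega> :: "nat \<Rightarrow> real"
    and idx :: "nat \<Rightarrow> nat \<Rightarrow> 'i"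
  assumes finI: "finite I"
    and ne: "\<forall>i\<in>I. nonexpansive (T i)"
    and fixne: "(\<Inter>i\<in>I. Fix (T i)) \<noteq> {}"
    and av: "\<forall>i\<in>I. 0 < a i \<and> a i < 1 \<and> averaged (a i) (T i)"
    and p: "0 < p"
    and m: "\<forall>k\<in>{1..p}. 0 < m k"
    and \<omega>: "\<forall>k\<in>{1..p}. 0 < \<omega> k \<and> \<omega> k \<le> 1"
    and surj: "(\<lambda>(k, l). idx k l) ` {(k, l). k \<in> {1..p} \<and> l \<in> {1..m k}} = I"
    and sum1: "(\<Sum>k=1..p. \<omega> k) = 1"
  defines "Tc \<equiv> (\<lambda>x. \<Sum>k=1..p. \<omega> k *\<^sub>R comp_chain T (idx k) (m k) x)"
    and "\<alpha> \<equiv> (\<Sum>k=1..p. \<omega> k /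
                 (1 + 1 / (\<Sum>i=1..m k. a (idx k i) / (1 - a (idx k i)))))"
  shows "averaged \<alpha> Tc \<and> Fix Tc = (\<Inter>i\<in>I. Fix (T i))
    \<and> (\<forall>(lam :: nat \<Rightarrow> real) x.
          (\<forall>n. 0 < lam n \<and> lam n < 1 / \<alpha>)
          \<longrightarrow> filterlim (\<lambda>N. \<Sum>n<N. lam n * (1 / \<alpha> - lam n)) at_top sequentially
          \<longrightarrow> (\<forall>n. x (Suc n) = x n + lam n *\<^sub>R (Tc (x n) - x n))
          \<longrightarrow> (\<exists>z\<in>(\<Inter>i\<in>I. Fix (T i)). weakly_converges x z))"
proof -
  define K where "K = {1..p}"
  have finK: "finite K" and neK: "K \<noteq> {}" using p by (auto simp: K_def)
  define L where "L k = map (idx k) [1..<m k+1]" for k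
  define ch where "ch k = comp_chain T (idx k) (m k)" for k
  have chL: "ch k = foldr (\<circ>) (map T (L k)) id" for k unfolding ch_def L_def by (rule chain_eq)
  have idxI: "idx k l \<in> I" if "k \<in> K" "l \<in> {1..m k}" for k l
    using surj that unfolding K_def by blast
  have setL: "set (L k) \<subseteq> I" if "k \<in> K" for k
    unfolding L_def set_chain using idxI[OF that] by blast
  have avL: "\<forall>i\<in>set (L k). averaged (a i) (T i)" if "k \<in> K" for k
    using setL[OF that] av by blast
  define s where "s k = (\<Sum>i=1..m k. a (idx k i) / (1 - a (idx k i)))" for k
  have s_pos: "0 < s k" if k: "k \<in> K" for k
    unfolding s_def
  proof (rule sum_pos)
    show "finite {1..m k}" by simp
    have "0 < m k" using m k unfolding K_def by blast
    thus "{1..m k} \<noteq> {}" by simp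
    fix i assume "i \<in> {1..m k}"
    hence "0 < a (idx k i)" "a (idx k i) < 1" using idxI[OF k] av by blast+
    thus "0 < a (idx k i) / (1 - a (idx k i))" by simp
  qed
  have PBk: "PB (s k) (ch k)" if "k \<in> K" for k
  proof -
    have "PB (sum_list (map (\<lambda>i. a i/(1 - a i)) (L k))) (foldr (\<circ>) (map T (L k)) id)"
      by (rule PB_chain[OF avL[OF that]])
    moreover have "sum_list (map (\<lambda>i. a i/(1 - a i)) (L k)) = s k"
      unfolding L_def s_def by (rule sum_chain)
    ultimately show ?thesis using chL by simp
  qed
  define al where "al k = s k / (1 + s k)" for k
  have avk: "averaged (al k) (ch k)" if "k \<in> K" for k
    unfolding al_def using PB_avg[OF PBk[OF that] s_pos[OF that]] .
  have Tc_eq: "Tc = (\<lambda>x. \<Sum>k\<in>K. \<omega> k *\<^sub>R ch k x)" unfolding Tc_def K_def ch_def by simp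
  have alpha_eq: "\<alpha> = (\<Sum>k\<in>K. \<omega> k * al k)"
    unfolding \<alpha>_def K_def
  proof (rule sum.cong[OF refl])
    fix k assume "k \<in> {1..p}"
    hence sk: "0 < s k" using s_pos unfolding K_def by blast
    show "\<omega> k / (1 + 1 / (\<Sum>i=1..m k. a (idx k i) / (1 - a (idx k i)))) = \<omega> k * al k"
      unfolding s_def[symmetric] al_def using sk by (simp add: field_simps)
  qed
  have wK: "\<forall>k\<in>K. 0 < \<omega> k" using \<omega> unfolding K_def by blast
  have sK: "sum \<omega> K = 1" using sum1 unfolding K_def .
  have part1: "averaged \<alpha> Tc"
    unfolding Tc_eq alpha_eq by (rule avg_convex[OF finK neK _ wK sK]) (use avk in blast)
  obtain z where z: "z \<in> (\<Inter>i\<in>I. Fix (T i))" using fixne by blast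
  have Tz: "\<forall>i\<in>I. T i z = z" using z unfolding Fix_def by blast
  have Fix_eq: "Fix Tc = (\<Inter>i\<in>I. Fix (T i))"
  proof
    show "(\<Inter>i\<in>I. Fix (T i)) \<subseteq> Fix Tc"
    proof
      fix y assume y: "y \<in> (\<Inter>i\<in>I. Fix (T i))"
      have "ch k y = y" if k: "k \<in> K" for k
        unfolding chL using setL[OF k] y unfolding Fix_def by (intro chain_fixall) blast
      hence "Tc y = (\<Sum>k\<in>K. \<omega> k *\<^sub>R y)" unfolding Tc_eq by simp
      also have "\<dots> = y" using sK by (simp add: scaleR_sum_left[symmetric])
      finally show "y \<in> Fix Tc" unfolding Fix_def by simp
    qed
  next
    show "Fix Tc \<subseteq> (\<Inter>i\<in>I. Fix (T i))"
    proof
      fix y assume "y \<in> Fix Tc"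
      hence fy: "(\<Sum>k\<in>K. \<omega> k *\<^sub>R ch k y) = y" unfolding Fix_def Tc_eq by simp
      have pre: "\<forall>i\<in>set (L k). averaged (a i) (T i) \<and> T i z = z" if "k \<in> K" for k
        using avL[OF that] setL[OF that] Tz by blast
      have q: "norm (ch k y - z) \<le> norm (y - z) \<and>
         (norm (ch k y - z) = norm (y - z) \<longrightarrow> (\<forall>i\<in>set (L k). T i y = y))" if "k \<in> K" for k
        unfolding chL by (rule chain_quasi[OF pre[OF that]])
      have eqn: "\<forall>k\<in>K. norm (ch k y - z) = norm (y - z)"
        using convex_fix[where C=ch and z=z and x=y and K=K and w=\<omega>] finK wK sK fy q by blast
      have allk: "\<forall>k\<in>K. \<forall>i\<in>set (L k). T i y = y" using q eqn by blast
      show "y \<in> (\<Inter>i\<in>I. Fix (T i))"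
      proof
        fix i assume iI: "i \<in> I"
        have "i \<in> (\<lambda>(k, l). idx k l) ` {(k, l). k \<in> {1..p} \<and> l \<in> {1..m k}}" using surj iI by simp
        then obtain kl where kl0: "kl \<in> {(k, l). k \<in> {1..p} \<and> l \<in> {1..m k}}" "i = (\<lambda>(k, l). idx k l) kl"
          by (rule imageE)
        obtain k l where kl: "k \<in> {1..p}" "l \<in> {1..m k}" "i = idx k l"
          using kl0 by (cases kl) auto
        have "i \<in> set (L k)" unfolding L_def set_chain using kl by blast
        thus "y \<in> Fix (T i)" using allk kl(1) unfolding K_def Fix_def by blast
      qed
    qed
  qed
  from part1 obtain R where neR: "nonexpansive R" and TcR: "Tc = (\<lambda>x. (1 - \<alpha>) *\<^sub>R x + \<alpha> *\<^sub>R R x)"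
    and a01: "0 < \<alpha>" "\<alpha> < 1" unfolding averaged_def by blast
  have disp: "Tc y - y = \<alpha> *\<^sub>R (R y - y)" for y by (simp add: TcR algebra_simps)
  have fixR: "R y = y \<longleftrightarrow> Tc y = y" for y
  proof -
    have "Tc y = y \<longleftrightarrow> Tc y - y = 0" by simp
    also have "\<dots> \<longleftrightarrow> R y - y = 0" unfolding disp using a01 by simp
    finally show ?thesis by simp
  qed
  have part2: "\<forall>(lam :: nat \<Rightarrow> real) x.
          (\<forall>n. 0 < lam n \<and> lam n < 1 / \<alpha>)
          \<longrightarrow> filterlim (\<lambda>N. \<Sum>n<N. lam n * (1 / \<alpha> - lam n)) at_top sequentially
          \<longrightarrow> (\<forall>n. x (Suc n) = x n + lam n *\<^sub>R (Tc (x n) - x n))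
          \<longrightarrow> (\<exists>z\<in>(\<Inter>i\<in>I. Fix (T i)). weakly_converges x z)"
  proof (intro allI impI)
    fix lam :: "nat \<Rightarrow> real" and x :: "nat \<Rightarrow> 'a"
    assume lam: "\<forall>n. 0 < lam n \<and> lam n < 1 / \<alpha>"
      and dv: "filterlim (\<lambda>N. \<Sum>n<N. lam n * (1 / \<alpha> - lam n)) at_top sequentially"
      and itx: "\<forall>n. x (Suc n) = x n + lam n *\<^sub>R (Tc (x n) - x n)"
    define mu where "mu n = \<alpha> * lam n" for n
    have mu: "0 < mu n \<and> mu n < 1" for n
    proof -
      have "0 < lam n" "lam n < 1 / \<alpha>" using lam by auto
      hence "\<alpha> * lam n < \<alpha> * (1 / \<alpha>)" using a01 by (intro mult_strict_left_mono) auto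
      thus ?thesis using a01 \<open>0 < lam n\<close> unfolding mu_def by simp
    qed
    have sumeq: "(\<lambda>N. \<Sum>n<N. mu n * (1 - mu n)) = (\<lambda>N. \<alpha>\<^sup>2 * (\<Sum>n<N. lam n * (1 / \<alpha> - lam n)))"
    proof
      fix N
      have "(\<Sum>n<N. mu n * (1 - mu n)) = (\<Sum>n<N. \<alpha>\<^sup>2 * (lam n * (1 / \<alpha> - lam n)))"
        by (rule sum.cong[OF refl]) (use a01 in \<open>simp add: mu_def field_simps power2_eq_square\<close>)
      thus "(\<Sum>n<N. mu n * (1 - mu n)) = \<alpha>\<^sup>2 * (\<Sum>n<N. lam n * (1 / \<alpha> - lam n))"
        by (simp add: sum_distrib_left)
    qed
    have dv2: "filterlim (\<lambda>N. \<Sum>n<N. mu n * (1 - mu n)) at_top sequentially"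
      unfolding sumeq
      by (rule filterlim_tendsto_pos_mult_at_top[OF tendsto_const _ dv]) (use a01 in simp)
    have itm: "x (Suc n) = x n + mu n *\<^sub>R (R (x n) - x n)" for n
      using itx unfolding disp mu_def by simp
    interpret KMloc R mu x
      by unfold_locales (use neR mu dv2 itm in auto)
    have Rz: "R z = z" using z Fix_eq fixR unfolding Fix_def by blast
    obtain w where w: "R w = w" "weakly_converges x w" using KM_weak[OF Rz] by blast
    have "w \<in> (\<Inter>i\<in>I. Fix (T i))" using w(1) fixR Fix_eq unfolding Fix_def by blast
    thus "\<exists>z\<in>(\<Inter>i\<in>I. Fix (T i)). weakly_converges x z" using w(2) by blast
  qed
  show ?thesis using part1 Fix_eq part2 by blast
qed

end
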